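(* If $\oplus$ is the drastic maximum $T_d'$ and $\otimes$ is a $T$-norm with no zero divisors, then $(\otimes,\oplus)$ satisfies the rearrangement inequality. If $\otimes$ is the drastic minimum $T_d$ and $\oplus$ is a $T$-conorm such that the $T$-norm $\Phi(\oplus)(x,y)=1-((1-x)\oplus(1-y))$ has no zero divisors, then $(\otimes,\oplus)$ satisfies the dual rearrangement inequality.
   Context: A uninorm is a function $\otimes:[0,1]^2\to[0,1]$ that is commutative, associative, monotonic ($x\leq y$ implies $x\otimes z\leq y\otimes z$), and has an identity element; a $T$-norm is a uninorm with identity $1$, a $T$-conorm one with identity $0$. For a $T$-norm $f$, a number $0<x<1$ is a zero divisor if there is $0<y<1$ with $f(x,y)=0$. The drastic minimum is $T_d(x,y)=\min(x,y)$ if $\max(x,y)=1$ and $0$ otherwise; the drastic maximum is $T_d'(x,y)=\max(x,y)$ if $\min(x,y)=0$ and $1$ otherwise. $(\otimes,\oplus)$ satisfies the rearrangement inequality if for every $n\geq1$, all $0\leq x_1\leq\cdots\leq x_n\leq 1$, $0\leq y_1\leq\cdots\leq y_n\leq 1$ and every permutation $\sigma$ of $\{1,\dots,n\}$, $$(x_n\otimes y_1)\oplus\cdots\oplus(x_1\otimes y_n)\leq (x_{\sigma(1)}\otimes y_1)\oplus\cdots\oplus(x_{\sigma(n)}\otimes y_n)\leq (x_1\otimes y_1)\oplus\cdots\oplus(x_n\otimes y_n),$$ and the dual rearrangement inequality if for all such data $$(x_n\oplus y_1)\otimes\cdots\otimes(x_1\oplus y_n)\geq (x_{\sigma(1)}\oplus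 y_1)\otimes\cdots\otimes(x_{\sigma(n)}\oplus y_n)\geq (x_1\oplus y_1)\otimes\cdots\otimes(x_n\oplus y_n).$$ *)

theory Defs
  imports "HOL-Analysis.Analysis" "HOL-Combinatorics.Permutations"
begin


definition uninorm :: "(real \<Rightarrow> real \<Rightarrow> real) \<Rightarrow> bool" where
  "uninorm f \<longleftrightarrow>
     (\<forall>x\<in>{0..1}. \<forall>y\<in>{0..1}. f x y \<in> {0..1}) \<and>
     (\<forall>x\<in>{0..1}. \<forall>y\<in>{0..1}. f x y = f y x) \<and>
     (\<forall>x\<in>{0..1}. \<forall>y\<in>{0..1}. \<forall>z\<in>{0..1}. f (f x y) z = f x (f y z)) \<and>
     (\<forall>x\<in>{0..1}. \<forall>y\<in>{0..1}. \<forall>z\<in>{0..1}. x \<le> y \<longrightarrow> f x z \<le> f y z) \<and>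
     (\<exists>e\<in>{0..1}. \<forall>x\<in>{0..1}. f e x = x)"

definition tnorm :: "(real \<Rightarrow> real \<Rightarrow> real) \<Rightarrow> bool" where
  "tnorm f \<longleftrightarrow> uninorm f \<and> (\<forall>x\<in>{0..1}. f 1 x = x)"

definition tconorm :: "(real \<Rightarrow> real \<Rightarrow> real) \<Rightarrow> bool" where
  "tconorm f \<longleftrightarrow> uninorm f \<and> (\<forall>x\<in>{0..1}. f 0 x = x)"

definition no_zero_divisors :: "(real \<Rightarrow> real \<Rightarrow> real) \<Rightarrow> bool" where
  "no_zero_divisors f \<longleftrightarrow> \<not> (\<exists>x y. 0 < x \<and> x < 1 \<and> 0 < y \<and> y < 1 \<and> f x y = 0)"

definition drastic_min :: "real \<Rightarrow> real \<Rightarrow> real" where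
  "drastic_min x y = (if max x y = 1 then min x y else 0)"

definition drastic_max :: "real \<Rightarrow> real \<Rightarrow> real" where
  "drastic_max x y = (if min x y = 0 then max x y else 1)"

definition dual_op :: "(real \<Rightarrow> real \<Rightarrow> real) \<Rightarrow> real \<Rightarrow> real \<Rightarrow> real" where
  "dual_op g x y = 1 - g (1 - x) (1 - y)"

fun opfold :: "(real \<Rightarrow> real \<Rightarrow> real) \<Rightarrow> (nat \<Rightarrow> real) \<Rightarrow> nat \<Rightarrow> real" where
  "opfold f g 0 = undefined"
| "opfold f g (Suc 0) = g 1"
| "opfold f g (Suc (Suc n)) = f (opfold f g (Suc n)) (g (Suc (Suc n)))"

definition rearrangement_ineq ::
  "(real \<Rightarrow> real \<Rightarrow> real) \<Rightarrow> (real \<Rightarrow> real \<Rightarrow> real) \<Rightarrow> bool" where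
  "rearrangement_ineq otimes oplus \<longleftrightarrow>
     (\<forall>n::nat. \<forall>x y :: nat \<Rightarrow> real. \<forall>\<sigma>.
        n \<ge> 1 \<longrightarrow>
        (\<forall>i\<in>{1..n}. 0 \<le> x i \<and> x i \<le> 1 \<and> 0 \<le> y i \<and> y i \<le> 1) \<longrightarrow>
        (\<forall>i j. 1 \<le> i \<longrightarrow> i \<le> j \<longrightarrow> j \<le> n \<longrightarrow> x i \<le> x j \<and> y i \<le> y j) \<longrightarrow>
        \<sigma> permutes {1..n} \<longrightarrow>
        opfold oplus (\<lambda>i. otimes (x (n + 1 - i)) (y i)) n
          \<le> opfold oplus (\<lambda>i. otimes (x (\<sigma> i)) (y i)) n \<and>
        opfold oplus (\<lambda>i. otimes (x (\<sigma> i)) (y i)) n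
          \<le> opfold oplus (\<lambda>i. otimes (x i) (y i)) n)"

definition dual_rearrangement_ineq ::
  "(real \<Rightarrow> real \<Rightarrow> real) \<Rightarrow> (real \<Rightarrow> real \<Rightarrow> real) \<Rightarrow> bool" where
  "dual_rearrangement_ineq otimes oplus \<longleftrightarrow>
     (\<forall>n::nat. \<forall>x y :: nat \<Rightarrow> real. \<forall>\<sigma>.
        n \<ge> 1 \<longrightarrow>
        (\<forall>i\<in>{1..n}. 0 \<le> x i \<and> x i \<le> 1 \<and> 0 \<le> y i \<and> y i \<le> 1) \<longrightarrow>
        (\<forall>i j. 1 \<le> i \<longrightarrow> i \<le> j \<longrightarrow> j \<le> n \<longrightarrow> x i \<le> x j \<and> y i \<le> y j) \<longrightarrow>
        \<sigma> permutes {1..n} \<longrightarrow>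
        opfold otimes (\<lambda>i. oplus (x (n + 1 - i)) (y i)) n
          \<ge> opfold otimes (\<lambda>i. oplus (x (\<sigma> i)) (y i)) n \<and>
        opfold otimes (\<lambda>i. oplus (x (\<sigma> i)) (y i)) n
          \<ge> opfold otimes (\<lambda>i. oplus (x i) (y i)) n)"

end

theory Submission
  imports Defs
begin


lemma dmax_0: "0 \<le> v \<Longrightarrow> drastic_max v 0 = v" by (simp add: drastic_max_def)
lemma dmax_0l: "0 \<le> v \<Longrightarrow> drastic_max 0 v = v" by (simp add: drastic_max_def)
lemma dmax_pos: "0 < a \<Longrightarrow> 0 < b \<Longrightarrow> drastic_max a b = 1" by (simp add: drastic_max_def)
lemma dmin_1: "v \<le> 1 \<Longrightarrow> drastic_min v 1 = v" by (simp add: drastic_min_def)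
lemma dmin_1l: "v \<le> 1 \<Longrightarrow> drastic_min 1 v = v" by (simp add: drastic_min_def)
lemma dmin_lt: "a < 1 \<Longrightarrow> b < 1 \<Longrightarrow> drastic_min a b = 0" by (simp add: drastic_min_def)

lemma opfold_dmax:
  assumes "1 \<le> n" "\<forall>i\<in>{1..n}. 0 \<le> g i \<and> g i \<le> 1"
  shows "opfold drastic_max g n = (if 2 \<le> card {i\<in>{1..n}. g i \<noteq> 0} then 1
           else (\<Sum>i\<in>{i\<in>{1..n}. g i \<noteq> 0}. g i))"
  using assms
proof (induction n rule: nat_induct_at_least)
  case base
  have "{i\<in>{1..1::nat}. g i \<noteq> 0} = (if g 1 = 0 then {} else {1})" by auto
  then show ?case by auto
next
  case (Suc n)
  then obtain m where m: "n = Suc m" by (cases n) auto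
  let ?S = "{i\<in>{1..n}. g i \<noteq> 0}"
  let ?S' = "{i\<in>{1..Suc n}. g i \<noteq> 0}"
  have IH: "opfold drastic_max g n = (if 2 \<le> card ?S then 1 else (\<Sum>i\<in>?S. g i))"
    using Suc by auto
  have fin: "finite ?S" by auto
  have gn: "0 \<le> g (Suc n)" "g (Suc n) \<le> 1" using Suc.prems by auto
  have step: "opfold drastic_max g (Suc n) = drastic_max (opfold drastic_max g n) (g (Suc n))"
    using m by simp
  show ?case
  proof (cases "g (Suc n) = 0")
    case True
    have "?S' = ?S" using True by (auto simp: le_Suc_eq)
    moreover have "0 \<le> opfold drastic_max g n"
    proof -
      have "0 \<le> (\<Sum>i\<in>?S. g i)" using Suc.prems by (intro sum_nonneg) auto
      then show ?thesis using IH by auto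
    qed
    ultimately show ?thesis using step True IH by (simp add: dmax_0)
  next
    case False
    have S': "?S' = insert (Suc n) ?S" using False by (auto simp: le_Suc_eq)
    have nin: "Suc n \<notin> ?S" by auto
    have cS': "card ?S' = Suc (card ?S)" using S' nin fin by simp
    consider "card ?S = 0" | "card ?S = 1" | "2 \<le> card ?S" by linarith
    then show ?thesis
    proof cases
      case 1
      then have e: "?S = {}" using fin by simp
      then have v: "opfold drastic_max g n = 0" using IH unfolding e by simp
      have S1: "?S' = {Suc n}" unfolding S' e by simp
      show ?thesis using step v S1 gn by (simp add: dmax_0l)
    next
      case 2
      then obtain k where k: "?S = {k}" by (meson card_1_singletonE)
      then have "g k \<noteq> 0" "k \<in> {1..n}" by auto
      then have "0 < g k" using Suc.prems by force
      then show ?thesis using step IH k cS' 2 False gn by (simp add: dmax_pos)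
    next
      case 3
      then show ?thesis using step IH cS' False gn 3 by (simp add: dmax_pos)
    qed
  qed
qed

lemma opfold_dmin:
  assumes "1 \<le> n" "\<forall>i\<in>{1..n}. 0 \<le> g i \<and> g i \<le> 1"
  shows "opfold drastic_min g n = (if 2 \<le> card {i\<in>{1..n}. g i \<noteq> 1} then 0
           else 1 - (\<Sum>i\<in>{i\<in>{1..n}. g i \<noteq> 1}. 1 - g i))"
  using assms
proof (induction n rule: nat_induct_at_least)
  case base
  have "{i\<in>{1..1::nat}. g i \<noteq> 1} = (if g 1 = 1 then {} else {1})" by auto
  then show ?case by auto
next
  case (Suc n)
  then obtain m where m: "n = Suc m" by (cases n) auto
  let ?S = "{i\<in>{1..n}. g i \<noteq> 1}"
  let ?S' = "{i\<in>{1..Suc n}. g i \<noteq> 1}"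
  have IH: "opfold drastic_min g n = (if 2 \<le> card ?S then 0 else 1 - (\<Sum>i\<in>?S. 1 - g i))"
    using Suc by auto
  have fin: "finite ?S" by auto
  have gn: "0 \<le> g (Suc n)" "g (Suc n) \<le> 1" using Suc.prems by auto
  have step: "opfold drastic_min g (Suc n) = drastic_min (opfold drastic_min g n) (g (Suc n))"
    using m by simp
  show ?case
  proof (cases "g (Suc n) = 1")
    case True
    have "?S' = ?S" using True by (auto simp: le_Suc_eq)
    moreover have "opfold drastic_min g n \<le> 1"
    proof -
      have "0 \<le> (\<Sum>i\<in>?S. 1 - g i)" using Suc.prems by (intro sum_nonneg) auto
      then show ?thesis using IH by auto
    qed
    ultimately show ?thesis using step True IH by (simp add: dmin_1)
  next
    case False
    have S': "?S' = insert (Suc n) ?S" using False by (auto simp: le_Suc_eq)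
    have nin: "Suc n \<notin> ?S" by auto
    have cS': "card ?S' = Suc (card ?S)" using S' nin fin by simp
    consider "card ?S = 0" | "card ?S = 1" | "2 \<le> card ?S" by linarith
    then show ?thesis
    proof cases
      case 1
      then have e: "?S = {}" using fin by simp
      then have v: "opfold drastic_min g n = 1" using IH unfolding e by simp
      have S1: "?S' = {Suc n}" unfolding S' e by simp
      show ?thesis using step v S1 gn by (simp add: dmin_1l)
    next
      case 2
      then obtain k where k: "?S = {k}" by (meson card_1_singletonE)
      then have "g k \<noteq> 1" "k \<in> {1..n}" by auto
      then have "g k < 1" using Suc.prems by force
      then show ?thesis using step IH k cS' 2 False gn by (simp add: dmin_lt)
    next
      case 3
      then show ?thesis using step IH cS' False gn 3 by (simp add: dmin_lt)
    qed
  qed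
qed

lemma trich:
  assumes "finite S" shows "S = {} \<or> (\<exists>k. S = {k}) \<or> 2 \<le> card S"
proof -
  consider "card S = 0" | "card S = 1" | "2 \<le> card S" by linarith
  then show ?thesis
  proof cases
    case 2 then show ?thesis by (metis card_1_singletonE)
  qed (use assms in auto)
qed

lemma two_elems:
  assumes "2 \<le> card (S::nat set)" shows "\<exists>i j. i \<in> S \<and> j \<in> S \<and> i < j"
proof -
  have f: "finite S" using assms card_ge_0_finite by force
  have "\<not> card S \<le> Suc 0" using assms by simp
  then obtain a b where "a \<in> S" "b \<in> S" "a \<noteq> b" using card_le_Suc0_iff_eq[OF f] by blast
  then show ?thesis by (metis linorder_neqE_nat)
qed

lemma count_up:
  assumes "bij_betw s {1..n} {1..n}" "1 \<le> i" "i \<le> j" "j \<le> n"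
  shows "1 + j - i \<le> card {p\<in>{1..n}. i \<le> p \<and> n + 1 - j \<le> s p}"
proof -
  let ?A = "{i..n}"
  let ?B = "{p\<in>{1..n}. s p \<in> {n+1-j..n}}"
  have cA: "card ?A = n + 1 - i" by simp
  have inj: "inj_on s ?B" using assms(1) unfolding bij_betw_def by (auto intro: inj_on_subset)
  have im: "s ` ?B = {n+1-j..n}"
  proof
    show "s ` ?B \<subseteq> {n+1-j..n}" by auto
    show "{n+1-j..n} \<subseteq> s ` ?B"
    proof
      fix q assume q: "q \<in> {n+1-j..n}"
      then have "q \<in> {1..n}" using assms by auto
      then have "q \<in> s ` {1..n}" using assms(1) unfolding bij_betw_def by auto
      then obtain p where "p \<in> {1..n}" "q = s p" by blast
      then show "q \<in> s ` ?B" using q by auto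
    qed
  qed
  have cB: "card ?B = j" using card_image[OF inj] im assms by simp
  have fA: "finite ?A" and fB: "finite ?B" by auto
  have U: "card (?A \<union> ?B) \<le> n"
  proof -
    have "?A \<union> ?B \<subseteq> {1..n}" using assms by auto
    then have "card (?A \<union> ?B) \<le> card {1..n::nat}" by (intro card_mono) auto
    then show ?thesis by simp
  qed
  have e: "card ?A + card ?B = card (?A \<union> ?B) + card (?A \<inter> ?B)"
    using card_Un_Int[OF fA fB] .
  have sr: "\<forall>p\<in>{1..n}. s p \<in> {1..n}" using assms(1) unfolding bij_betw_def by auto
  have "?A \<inter> ?B = {p\<in>{1..n}. i \<le> p \<and> n + 1 - j \<le> s p}" using sr assms by auto
  then show ?thesis using e U cA cB assms by simp
qed

lemma count_down:
  assumes "bij_betw s {1..n} {1..n}" "1 \<le> i" "i \<le> j" "j \<le> n"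
  shows "1 + j - i \<le> card {p\<in>{1..n}. p \<le> j \<and> s p \<le> n + 1 - i}"
proof -
  let ?A = "{1..j}"
  let ?B = "{p\<in>{1..n}. s p \<in> {1..n+1-i}}"
  have cA: "card ?A = j" by simp
  have inj: "inj_on s ?B" using assms(1) unfolding bij_betw_def by (auto intro: inj_on_subset)
  have im: "s ` ?B = {1..n+1-i}"
  proof
    show "s ` ?B \<subseteq> {1..n+1-i}" by auto
    show "{1..n+1-i} \<subseteq> s ` ?B"
    proof
      fix q assume q: "q \<in> {1..n+1-i}"
      then have "q \<in> {1..n}" using assms by auto
      then have "q \<in> s ` {1..n}" using assms(1) unfolding bij_betw_def by auto
      then obtain p where "p \<in> {1..n}" "q = s p" by blast
      then show "q \<in> s ` ?B" using q by auto
    qed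
  qed
  have cB: "card ?B = n + 1 - i" using card_image[OF inj] im assms by simp
  have fA: "finite ?A" and fB: "finite ?B" by auto
  have U: "card (?A \<union> ?B) \<le> n"
  proof -
    have "?A \<union> ?B \<subseteq> {1..n}" using assms by auto
    then have "card (?A \<union> ?B) \<le> card {1..n::nat}" by (intro card_mono) auto
    then show ?thesis by simp
  qed
  have e: "card ?A + card ?B = card (?A \<union> ?B) + card (?A \<inter> ?B)"
    using card_Un_Int[OF fA fB] .
  have sr: "\<forall>p\<in>{1..n}. s p \<in> {1..n}" using assms(1) unfolding bij_betw_def by auto
  have "?A \<inter> ?B = {p\<in>{1..n}. p \<le> j \<and> s p \<le> n + 1 - i}" using sr assms by auto
  then show ?thesis using e U cA cB assms by simp
qed



lemma part1:
  assumes tn: "tnorm T" and nz: "no_zero_divisors T"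
  shows "rearrangement_ineq T drastic_max"
  unfolding rearrangement_ineq_def
proof (intro allI impI)
  fix n :: nat and x y :: "nat \<Rightarrow> real" and \<sigma>
  assume n1: "1 \<le> n" and rng: "\<forall>i\<in>{1..n}. 0 \<le> x i \<and> x i \<le> 1 \<and> 0 \<le> y i \<and> y i \<le> 1"
    and mon: "\<forall>i j. 1 \<le> i \<longrightarrow> i \<le> j \<longrightarrow> j \<le> n \<longrightarrow> x i \<le> x j \<and> y i \<le> y j"
    and perm: "\<sigma> permutes {1..n}"
  have U: "uninorm T" and T1: "\<And>a. a\<in>{0..1} \<Longrightarrow> T 1 a = a" using tn unfolding tnorm_def by auto
  have T01: "\<And>a b. a\<in>{0..1} \<Longrightarrow> b\<in>{0..1} \<Longrightarrow> T a b \<in> {0..1}"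
    and Tc: "\<And>a b. a\<in>{0..1} \<Longrightarrow> b\<in>{0..1} \<Longrightarrow> T a b = T b a"
    and Tm: "\<And>a b c. a\<in>{0..1} \<Longrightarrow> b\<in>{0..1} \<Longrightarrow> c\<in>{0..1} \<Longrightarrow> a \<le> b \<Longrightarrow> T a c \<le> T b c"
    using U unfolding uninorm_def by blast+
  have Tmono: "T a b \<le> T a' b'" if "a\<in>{0..1}" "b\<in>{0..1}" "a'\<in>{0..1}" "b'\<in>{0..1}" "a \<le> a'" "b \<le> b'" for a b a' b'
  proof -
    have "T a b \<le> T a' b" using Tm that by blast
    also have "\<dots> = T b a'" using Tc that by blast
    also have "\<dots> \<le> T b' a'" using Tm that by blast
    also have "\<dots> = T a' b'" using Tc that by blast
    finally show ?thesis .
  qed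
  have Tnz: "(T a b \<noteq> 0) = (0 < a \<and> 0 < b)" if "a\<in>{0..1}" "b\<in>{0..1}" for a b
  proof
    assume h: "T a b \<noteq> 0"
    show "0 < a \<and> 0 < b"
    proof (rule ccontr)
      assume "\<not> (0 < a \<and> 0 < b)"
      then have "a = 0 \<or> b = 0" using that by auto
      moreover have z: "T 0 c = 0 \<and> T c 0 = 0" if "c\<in>{0..1}" for c
      proof -
        have "T 0 c \<le> T 0 1" using Tmono[of 0 c 0 1] that by auto
        also have "\<dots> = T 1 0" using Tc by auto
        also have "\<dots> = 0" using T1 by auto
        finally have "T 0 c = 0" using T01[of 0 c] that by auto
        then show ?thesis using Tc[of 0 c] that by auto
      qed
      ultimately show False using h that z[of a] z[of b] by auto
    qed
  next
    assume h: "0 < a \<and> 0 < b"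
    show "T a b \<noteq> 0"
    proof (cases "a = 1 \<or> b = 1")
      case True
      then show ?thesis
      proof
        assume "a = 1" then show ?thesis using T1[of b] h that by simp
      next
        assume "b = 1" then show ?thesis using T1[of a] Tc[of a 1] h that by simp
      qed
    next
      case False
      then show ?thesis using nz h that unfolding no_zero_divisors_def by auto
    qed
  qed
  have xr: "x i \<in> {0..1}" "y i \<in> {0..1}" if "i \<in> {1..n}" for i using rng that by auto
  have sig: "\<sigma> i \<in> {1..n}" if "i\<in>{1..n}" for i using permutes_in_image[OF perm] that by blast
  have bij: "bij_betw \<sigma> {1..n} {1..n}" using perm by (rule permutes_imp_bij)
  have gr: "\<forall>i\<in>{1..n}. 0 \<le> T (x (\<pi> i)) (y i) \<and> T (x (\<pi> i)) (y i) \<le> 1"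
    if "\<And>i. i\<in>{1..n} \<Longrightarrow> \<pi> i \<in> {1..n}" for \<pi>
    using T01 xr that by fastforce
  have Seq: "{i\<in>{1..n}. T (x (\<pi> i)) (y i) \<noteq> 0} = {i\<in>{1..n}. 0 < x (\<pi> i) \<and> 0 < y i}"
    if "\<And>i. i\<in>{1..n} \<Longrightarrow> \<pi> i \<in> {1..n}" for \<pi>
  proof (rule Collect_cong)
    fix i
    show "(i \<in> {1..n} \<and> T (x (\<pi> i)) (y i) \<noteq> 0) = (i \<in> {1..n} \<and> 0 < x (\<pi> i) \<and> 0 < y i)"
      using Tnz[of "x (\<pi> i)" "y i"] xr[of "\<pi> i"] xr[of i] that[of i] by auto
  qed
  have val: "opfold drastic_max (\<lambda>i. T (x (\<pi> i)) (y i)) n =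
      (if 2 \<le> card {i\<in>{1..n}. 0 < x (\<pi> i) \<and> 0 < y i} then 1
       else (\<Sum>i\<in>{i\<in>{1..n}. 0 < x (\<pi> i) \<and> 0 < y i}. T (x (\<pi> i)) (y i)))"
    if "\<And>i. i\<in>{1..n} \<Longrightarrow> \<pi> i \<in> {1..n}" for \<pi>
    using opfold_dmax[OF n1 gr[of \<pi>, OF that]] Seq[of \<pi>, OF that] by simp
  have val0: "opfold drastic_max (\<lambda>i. T (x (\<pi> i)) (y i)) n = 0"
    if "\<And>i. i\<in>{1..n} \<Longrightarrow> \<pi> i \<in> {1..n}" "{i\<in>{1..n}. 0 < x (\<pi> i) \<and> 0 < y i} = {}" for \<pi>
    using val[of \<pi>, OF that(1)] unfolding that(2) by simp
  have val1: "opfold drastic_max (\<lambda>i. T (x (\<pi> i)) (y i)) n = T (x (\<pi> k)) (y k)"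
    if "\<And>i. i\<in>{1..n} \<Longrightarrow> \<pi> i \<in> {1..n}" "{i\<in>{1..n}. 0 < x (\<pi> i) \<and> 0 < y i} = {k}" for \<pi> k
    using val[of \<pi>, OF that(1)] unfolding that(2) by simp
  have val2: "opfold drastic_max (\<lambda>i. T (x (\<pi> i)) (y i)) n = 1"
    if "\<And>i. i\<in>{1..n} \<Longrightarrow> \<pi> i \<in> {1..n}" "2 \<le> card {i\<in>{1..n}. 0 < x (\<pi> i) \<and> 0 < y i}" for \<pi>
    using val[of \<pi>, OF that(1)] that(2) by simp
  have bnd: "0 \<le> opfold drastic_max (\<lambda>i. T (x (\<pi> i)) (y i)) n \<and> opfold drastic_max (\<lambda>i. T (x (\<pi> i)) (y i)) n \<le> 1"
    if "\<And>i. i\<in>{1..n} \<Longrightarrow> \<pi> i \<in> {1..n}" for \<pi>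
  proof -
    have "finite {i\<in>{1..n}. 0 < x (\<pi> i) \<and> 0 < y i}" by auto
    from trich[OF this] show ?thesis
    proof (elim disjE exE)
      fix k assume k: "{i\<in>{1..n}. 0 < x (\<pi> i) \<and> 0 < y i} = {k}"
      then have "k \<in> {1..n}" by auto
      then show ?thesis using val1[of \<pi> k, OF that k] gr[of \<pi>, OF that] by auto
    qed (use val0[of \<pi>, OF that] val2[of \<pi>, OF that] in auto)
  qed
  have idr: "\<And>i. i\<in>{1..n} \<Longrightarrow> (\<lambda>i. i) i \<in> {1..n}" by simp
  have rvr: "\<And>i. i\<in>{1..n} \<Longrightarrow> (\<lambda>i. n + 1 - i) i \<in> {1..n}" by auto
  let ?Ss = "{i\<in>{1..n}. 0 < x (\<sigma> i) \<and> 0 < y i}"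
  let ?Si = "{i\<in>{1..n}. 0 < x i \<and> 0 < y i}"
  let ?Sr = "{i\<in>{1..n}. 0 < x (n + 1 - i) \<and> 0 < y i}"
  let ?Fs = "opfold drastic_max (\<lambda>i. T (x (\<sigma> i)) (y i)) n"
  let ?Fi = "opfold drastic_max (\<lambda>i. T (x i) (y i)) n"
  let ?Fr = "opfold drastic_max (\<lambda>i. T (x (n + 1 - i)) (y i)) n"
  have finS: "finite ?Ss" by auto
  have monx: "x i \<le> x j" "y i \<le> y j" if "1 \<le> i" "i \<le> j" "j \<le> n" for i j using mon that by auto
  have upper: "?Fs \<le> ?Fi"
  proof -
    have "finite ?Si" by auto
    from trich[OF this] show ?thesis
    proof (elim disjE exE)
      assume e: "?Si = {}"
      have "?Ss = {}"
      proof (rule ccontr)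
        assume "?Ss \<noteq> {}"
        then obtain i where i: "i \<in> {1..n}" "0 < x (\<sigma> i)" "0 < y i" by auto
        define m where "m = max (\<sigma> i) i"
        have "m \<in> {1..n}" using sig[OF i(1)] i(1) by (auto simp: m_def)
        moreover have "x (\<sigma> i) \<le> x m" "y i \<le> y m"
          using monx[of "\<sigma> i" m] monx[of i m] sig[OF i(1)] i(1) \<open>m \<in> {1..n}\<close> by (auto simp: m_def)
        ultimately have "m \<in> ?Si" using i by auto
        then show False using e by auto
      qed
      then show ?thesis using val0[of \<sigma>, OF sig] val0[of "\<lambda>i. i", OF idr] e by simp
    next
      assume "2 \<le> card ?Si"
      then show ?thesis using val2[of "\<lambda>i. i", OF idr] bnd[of \<sigma>, OF sig] by simp
    next
      fix k assume k: "?Si = {k}"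
      have kr: "k \<in> {1..n}" "0 < x k" "0 < y k" using k by auto
      have "n \<in> ?Si" using monx[of k n] kr n1 by auto
      then have kn: "k = n" using k by auto
      have Fi: "?Fi = T (x n) (y n)" using val1[of "\<lambda>i. i" k, OF idr] k kn by simp
      have nn: "n \<in> {1..n}" using n1 by auto
      have XY: "(\<forall>p\<in>{1..n}. 0 < x p \<longrightarrow> p = n) \<or> (\<forall>q\<in>{1..n}. 0 < y q \<longrightarrow> q = n)"
      proof (rule ccontr)
        assume "\<not> ?thesis"
        then obtain p q where pq: "p\<in>{1..n}" "0 < x p" "p \<noteq> n" "q\<in>{1..n}" "0 < y q" "q \<noteq> n" by auto
        define m where "m = max p q"
        have "m \<in> {1..n}" using pq by (auto simp: m_def)
        moreover have "x p \<le> x m" "y q \<le> y m"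
          using monx[of p m] monx[of q m] pq \<open>m \<in> {1..n}\<close> by (auto simp: m_def)
        ultimately have "m \<in> ?Si" using pq by auto
        then have "m = n" using k kn by auto
        then show False using pq by (auto simp: m_def max_def split: if_splits)
      qed
      from trich[OF finS] show ?thesis
      proof (elim disjE exE)
        assume "?Ss = {}"
        then show ?thesis using val0[of \<sigma>, OF sig] Fi T01 xr[OF nn] by auto
      next
        fix j assume j: "?Ss = {j}"
        then have jr: "j \<in> {1..n}" by auto
        have "T (x (\<sigma> j)) (y j) \<le> T (x n) (y n)"
          using Tmono xr jr sig[OF jr] xr[OF nn] monx[of "\<sigma> j" n] monx[of j n] by auto
        then show ?thesis using val1[of \<sigma> j, OF sig j] Fi by simp
      next
        assume "2 \<le> card ?Ss"
        then obtain i j where ij: "i \<in> ?Ss" "j \<in> ?Ss" "i \<noteq> j"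
          using two_elems by blast
        have ir: "i \<in> {1..n}" "0 < x (\<sigma> i)" "0 < y i" and jr: "j \<in> {1..n}" "0 < x (\<sigma> j)" "0 < y j"
          using ij by auto
        have "\<sigma> i = \<sigma> j \<or> i = j"
        proof (rule disjE[OF XY])
          assume h: "\<forall>p\<in>{1..n}. 0 < x p \<longrightarrow> p = n"
          have "\<sigma> i = n" using h sig[OF ir(1)] ir(2) by blast
          moreover have "\<sigma> j = n" using h sig[OF jr(1)] jr(2) by blast
          ultimately show ?thesis by simp
        next
          assume h: "\<forall>q\<in>{1..n}. 0 < y q \<longrightarrow> q = n"
          have "i = n" using h ir by blast
          moreover have "j = n" using h jr by blast
          ultimately show ?thesis by simp
        qed
        moreover have inj: "inj_on \<sigma> {1..n}" using bij by (simp add: bij_betw_def)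
        ultimately have "i = j" using inj_onD[OF inj _ ir(1) jr(1)] by blast
        then show ?thesis using ij(3) by simp
      qed
    qed
  qed
  have cnt: "1 + j - i \<le> card ?Ss" if "1 \<le> i" "i \<le> j" "j \<le> n" "0 < y i" "0 < x (n + 1 - j)" for i j
  proof -
    have "{p\<in>{1..n}. i \<le> p \<and> n + 1 - j \<le> \<sigma> p} \<subseteq> ?Ss"
    proof
      fix p assume p: "p \<in> {p\<in>{1..n}. i \<le> p \<and> n + 1 - j \<le> \<sigma> p}"
      then have "x (n + 1 - j) \<le> x (\<sigma> p)" "y i \<le> y p" using monx[of "n+1-j" "\<sigma> p"] monx[of i p] sig[of p] that by auto
      then show "p \<in> ?Ss" using p that by auto
    qed
    then have "card {p\<in>{1..n}. i \<le> p \<and> n + 1 - j \<le> \<sigma> p} \<le> card ?Ss" by (intro card_mono) auto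
    then show ?thesis using count_up[OF bij that(1-3)] by linarith
  qed
  have lower: "?Fr \<le> ?Fs"
  proof -
    have "finite ?Sr" by auto
    from trich[OF this] show ?thesis
    proof (elim disjE exE)
      assume "?Sr = {}"
      then show ?thesis using val0[of "\<lambda>i. n + 1 - i", OF rvr] bnd[of \<sigma>, OF sig] by simp
    next
      assume c2: "2 \<le> card ?Sr"
      then obtain i j where ij: "i \<in> ?Sr" "j \<in> ?Sr" "i < j"
        using two_elems by blast
      have "1 + j - i \<le> card ?Ss" using cnt[of i j] ij by auto
      then have "2 \<le> card ?Ss" using ij by linarith
      then show ?thesis using val2[of \<sigma>, OF sig] bnd[of "\<lambda>i. n + 1 - i", OF rvr] by simp
    next
      fix k assume k: "?Sr = {k}"
      have kr: "k \<in> {1..n}" "0 < x (n + 1 - k)" "0 < y k" using k by auto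
      have Fr: "?Fr = T (x (n + 1 - k)) (y k)" using val1[of "\<lambda>i. n + 1 - i" k, OF rvr k] by simp
      have "1 \<le> card ?Ss" using cnt[of k k] kr by auto
      then have ne: "?Ss \<noteq> {}" by (metis card.empty not_one_le_zero)
      from trich[OF finS] show ?thesis
      proof (elim disjE exE)
        assume "?Ss = {}" then show ?thesis using ne by simp
      next
        assume "2 \<le> card ?Ss"
        then show ?thesis using val2[of \<sigma>, OF sig] bnd[of "\<lambda>i. n + 1 - i", OF rvr] by simp
      next
        fix j assume j: "?Ss = {j}"
        then have jr: "j \<in> {1..n}" "0 < x (\<sigma> j)" "0 < y j" by auto
        have jk: "k \<le> j"
        proof (rule ccontr)
          assume "\<not> k \<le> j"
          then have "n + 1 - k \<le> n + 1 - j" "1 \<le> n + 1 - k" "n + 1 - j \<le> n" using jr kr by auto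
          then have "x (n + 1 - k) \<le> x (n + 1 - j)" using monx(1)[of "n+1-k" "n+1-j"] by blast
          then have "j \<in> ?Sr" using jr kr by auto
          then have "j = k" using k by blast
          then show False using \<open>\<not> k \<le> j\<close> by simp
        qed
        have sk: "n + 1 - k \<le> \<sigma> j"
        proof (rule ccontr)
          assume a: "\<not> n + 1 - k \<le> \<sigma> j"
          define p where "p = n + 1 - \<sigma> j"
          have sj: "\<sigma> j \<in> {1..n}" using sig[OF jr(1)] .
          have pr: "p \<in> {1..n}" "k < p" using sj a kr by (auto simp: p_def)
          have "y k \<le> y p" using monx[of k p] pr kr by auto
          moreover have "n + 1 - p = \<sigma> j" using sj by (auto simp: p_def)
          ultimately have "p \<in> ?Sr" using pr jr kr by auto
          then have "p = k" using k by blast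
          then show False using pr by simp
        qed
        have "T (x (n + 1 - k)) (y k) \<le> T (x (\<sigma> j)) (y j)"
        proof -
          have r1: "n + 1 - k \<in> {1..n}" using kr by auto
          have r2: "\<sigma> j \<in> {1..n}" using sig[OF jr(1)] .
          have a1: "x (n + 1 - k) \<le> x (\<sigma> j)" using monx(1)[of "n+1-k" "\<sigma> j"] r1 r2 sk by auto
          have a2: "y k \<le> y j" using monx(2)[of k j] kr(1) jr(1) jk by auto
          show ?thesis using Tmono[OF xr(1)[OF r1] xr(2)[OF kr(1)] xr(1)[OF r2] xr(2)[OF jr(1)] a1 a2] .
        qed
        then show ?thesis using val1[of \<sigma> j, OF sig j] Fr by simp
      qed
    qed
  qed
  show "?Fr \<le> ?Fs \<and> ?Fs \<le> ?Fi" using upper lower by simp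
qed



lemma part2:
  assumes tc: "tconorm T" and nz: "no_zero_divisors (dual_op T)"
  shows "dual_rearrangement_ineq drastic_min T"
  unfolding dual_rearrangement_ineq_def
proof (intro allI impI)
  fix n :: nat and x y :: "nat \<Rightarrow> real" and \<sigma>
  assume n1: "1 \<le> n" and rng: "\<forall>i\<in>{1..n}. 0 \<le> x i \<and> x i \<le> 1 \<and> 0 \<le> y i \<and> y i \<le> 1"
    and mon: "\<forall>i j. 1 \<le> i \<longrightarrow> i \<le> j \<longrightarrow> j \<le> n \<longrightarrow> x i \<le> x j \<and> y i \<le> y j"
    and perm: "\<sigma> permutes {1..n}"
  have U: "uninorm T" and T0: "\<And>a. a\<in>{0..1} \<Longrightarrow> T 0 a = a" using tc unfolding tconorm_def by auto
  have T01: "\<And>a b. a\<in>{0..1} \<Longrightarrow> b\<in>{0..1} \<Longrightarrow> T a b \<in> {0..1}"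
    and Tc: "\<And>a b. a\<in>{0..1} \<Longrightarrow> b\<in>{0..1} \<Longrightarrow> T a b = T b a"
    and Tm: "\<And>a b c. a\<in>{0..1} \<Longrightarrow> b\<in>{0..1} \<Longrightarrow> c\<in>{0..1} \<Longrightarrow> a \<le> b \<Longrightarrow> T a c \<le> T b c"
    using U unfolding uninorm_def by blast+
  have Tmono: "T a b \<le> T a' b'" if "a\<in>{0..1}" "b\<in>{0..1}" "a'\<in>{0..1}" "b'\<in>{0..1}" "a \<le> a'" "b \<le> b'" for a b a' b'
  proof -
    have "T a b \<le> T a' b" using Tm that by blast
    also have "\<dots> = T b a'" using Tc that by blast
    also have "\<dots> \<le> T b' a'" using Tm that by blast
    also have "\<dots> = T a' b'" using Tc that by blast
    finally show ?thesis .
  qed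
  have Tnz: "(T a b \<noteq> 1) = (a < 1 \<and> b < 1)" if "a\<in>{0..1}" "b\<in>{0..1}" for a b
  proof
    assume h: "T a b \<noteq> 1"
    show "a < 1 \<and> b < 1"
    proof (rule ccontr)
      assume "\<not> (a < 1 \<and> b < 1)"
      then have "a = 1 \<or> b = 1" using that by auto
      moreover have z: "T 1 c = 1 \<and> T c 1 = 1" if "c\<in>{0..1}" for c
      proof -
        have "T 1 0 \<le> T 1 c" using Tmono[of 1 0 1 c] that by auto
        moreover have "T 1 0 = T 0 1" using Tc by auto
        moreover have "T 0 1 = 1" using T0 by auto
        ultimately have "T 1 c = 1" using T01[of 1 c] that by auto
        then show ?thesis using Tc[of 1 c] that by auto
      qed
      ultimately show False using h that z[of a] z[of b] by auto
    qed
  next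
    assume h: "a < 1 \<and> b < 1"
    show "T a b \<noteq> 1"
    proof (cases "a = 0 \<or> b = 0")
      case True
      then show ?thesis
      proof
        assume "a = 0" then show ?thesis using T0[of b] h that by simp
      next
        assume "b = 0" then show ?thesis using T0[of a] Tc[of a 0] h that by simp
      qed
    next
      case False
      have d: "dual_op T (1 - a) (1 - b) = 1 - T a b" by (simp add: dual_op_def)
      have "dual_op T (1 - a) (1 - b) \<noteq> 0"
        using nz h that False unfolding no_zero_divisors_def by auto
      then show ?thesis using d by simp
    qed
  qed
  have xr: "x i \<in> {0..1}" "y i \<in> {0..1}" if "i \<in> {1..n}" for i using rng that by auto
  have sig: "\<sigma> i \<in> {1..n}" if "i\<in>{1..n}" for i using permutes_in_image[OF perm] that by blast
  have bij: "bij_betw \<sigma> {1..n} {1..n}" using perm by (rule permutes_imp_bij)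
  have gr: "\<forall>i\<in>{1..n}. 0 \<le> T (x (\<pi> i)) (y i) \<and> T (x (\<pi> i)) (y i) \<le> 1"
    if "\<And>i. i\<in>{1..n} \<Longrightarrow> \<pi> i \<in> {1..n}" for \<pi>
    using T01 xr that by fastforce
  have Seq: "{i\<in>{1..n}. T (x (\<pi> i)) (y i) \<noteq> 1} = {i\<in>{1..n}. x (\<pi> i) < 1 \<and> y i < 1}"
    if "\<And>i. i\<in>{1..n} \<Longrightarrow> \<pi> i \<in> {1..n}" for \<pi>
  proof (rule Collect_cong)
    fix i
    show "(i \<in> {1..n} \<and> T (x (\<pi> i)) (y i) \<noteq> 1) = (i \<in> {1..n} \<and> x (\<pi> i) < 1 \<and> y i < 1)"
      using Tnz[of "x (\<pi> i)" "y i"] xr[of "\<pi> i"] xr[of i] that[of i] by auto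
  qed
  have val: "opfold drastic_min (\<lambda>i. T (x (\<pi> i)) (y i)) n =
      (if 2 \<le> card {i\<in>{1..n}. x (\<pi> i) < 1 \<and> y i < 1} then 0
       else 1 - (\<Sum>i\<in>{i\<in>{1..n}. x (\<pi> i) < 1 \<and> y i < 1}. 1 - T (x (\<pi> i)) (y i)))"
    if "\<And>i. i\<in>{1..n} \<Longrightarrow> \<pi> i \<in> {1..n}" for \<pi>
    using opfold_dmin[OF n1 gr[of \<pi>, OF that]] Seq[of \<pi>, OF that] by simp
  have val0: "opfold drastic_min (\<lambda>i. T (x (\<pi> i)) (y i)) n = 1"
    if "\<And>i. i\<in>{1..n} \<Longrightarrow> \<pi> i \<in> {1..n}" "{i\<in>{1..n}. x (\<pi> i) < 1 \<and> y i < 1} = {}" for \<pi>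
    using val[of \<pi>, OF that(1)] unfolding that(2) by simp
  have val1: "opfold drastic_min (\<lambda>i. T (x (\<pi> i)) (y i)) n = T (x (\<pi> k)) (y k)"
    if "\<And>i. i\<in>{1..n} \<Longrightarrow> \<pi> i \<in> {1..n}" "{i\<in>{1..n}. x (\<pi> i) < 1 \<and> y i < 1} = {k}" for \<pi> k
    using val[of \<pi>, OF that(1)] unfolding that(2) by simp
  have val2: "opfold drastic_min (\<lambda>i. T (x (\<pi> i)) (y i)) n = 0"
    if "\<And>i. i\<in>{1..n} \<Longrightarrow> \<pi> i \<in> {1..n}" "2 \<le> card {i\<in>{1..n}. x (\<pi> i) < 1 \<and> y i < 1}" for \<pi>
    using val[of \<pi>, OF that(1)] that(2) by simp
  have bnd: "0 \<le> opfold drastic_min (\<lambda>i. T (x (\<pi> i)) (y i)) n \<and> opfold drastic_min (\<lambda>i. T (x (\<pi> i)) (y i)) n \<le> 1"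
    if "\<And>i. i\<in>{1..n} \<Longrightarrow> \<pi> i \<in> {1..n}" for \<pi>
  proof -
    have "finite {i\<in>{1..n}. x (\<pi> i) < 1 \<and> y i < 1}" by auto
    from trich[OF this] show ?thesis
    proof (elim disjE exE)
      fix k assume k: "{i\<in>{1..n}. x (\<pi> i) < 1 \<and> y i < 1} = {k}"
      then have "k \<in> {1..n}" by auto
      then show ?thesis using val1[of \<pi> k, OF that k] gr[of \<pi>, OF that] by auto
    qed (use val0[of \<pi>, OF that] val2[of \<pi>, OF that] in auto)
  qed
  have idr: "\<And>i. i\<in>{1..n} \<Longrightarrow> (\<lambda>i. i) i \<in> {1..n}" by simp
  have rvr: "\<And>i. i\<in>{1..n} \<Longrightarrow> (\<lambda>i. n + 1 - i) i \<in> {1..n}" by auto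
  let ?Ss = "{i\<in>{1..n}. x (\<sigma> i) < 1 \<and> y i < 1}"
  let ?Si = "{i\<in>{1..n}. x i < 1 \<and> y i < 1}"
  let ?Sr = "{i\<in>{1..n}. x (n + 1 - i) < 1 \<and> y i < 1}"
  let ?Fs = "opfold drastic_min (\<lambda>i. T (x (\<sigma> i)) (y i)) n"
  let ?Fi = "opfold drastic_min (\<lambda>i. T (x i) (y i)) n"
  let ?Fr = "opfold drastic_min (\<lambda>i. T (x (n + 1 - i)) (y i)) n"
  have finS: "finite ?Ss" by auto
  have monx: "x i \<le> x j" "y i \<le> y j" if "1 \<le> i" "i \<le> j" "j \<le> n" for i j using mon that by auto
  have upper: "?Fi \<le> ?Fs"
  proof -
    have "finite ?Si" by auto
    from trich[OF this] show ?thesis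
    proof (elim disjE exE)
      assume e: "?Si = {}"
      have "?Ss = {}"
      proof (rule ccontr)
        assume "?Ss \<noteq> {}"
        then obtain i where i: "i \<in> {1..n}" "x (\<sigma> i) < 1" "y i < 1" by auto
        define m where "m = min (\<sigma> i) i"
        have "m \<in> {1..n}" using sig[OF i(1)] i(1) by (auto simp: m_def)
        moreover have "x m \<le> x (\<sigma> i)" "y m \<le> y i"
          using monx[of m "\<sigma> i"] monx[of m i] sig[OF i(1)] i(1) \<open>m \<in> {1..n}\<close> by (auto simp: m_def)
        ultimately have "m \<in> ?Si" using i by auto
        then show False using e by auto
      qed
      then show ?thesis using val0[of \<sigma>, OF sig] val0[of "\<lambda>i. i", OF idr] e by simp
    next
      assume "2 \<le> card ?Si"
      then show ?thesis using val2[of "\<lambda>i. i", OF idr] bnd[of \<sigma>, OF sig] by simp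
    next
      fix k assume k: "?Si = {k}"
      have kr: "k \<in> {1..n}" "x k < 1" "y k < 1" using k by auto
      have "1 \<in> ?Si" using monx[of 1 k] kr n1 by auto
      then have kn: "k = 1" using k by auto
      have Fi: "?Fi = T (x 1) (y 1)" using val1[of "\<lambda>i. i" k, OF idr] k kn by simp
      have nn: "1 \<in> {1..n}" using n1 by auto
      have XY: "(\<forall>p\<in>{1..n}. x p < 1 \<longrightarrow> p = 1) \<or> (\<forall>q\<in>{1..n}. y q < 1 \<longrightarrow> q = 1)"
      proof (rule ccontr)
        assume "\<not> ?thesis"
        then obtain p q where pq: "p\<in>{1..n}" "x p < 1" "p \<noteq> 1" "q\<in>{1..n}" "y q < 1" "q \<noteq> 1" by auto
        define m where "m = min p q"
        have "m \<in> {1..n}" using pq by (auto simp: m_def)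
        moreover have "x m \<le> x p" "y m \<le> y q"
          using monx[of m p] monx[of m q] pq \<open>m \<in> {1..n}\<close> by (auto simp: m_def)
        ultimately have "m \<in> ?Si" using pq by auto
        then have "m = 1" using k kn by auto
        then show False using pq by (auto simp: m_def min_def split: if_splits)
      qed
      from trich[OF finS] show ?thesis
      proof (elim disjE exE)
        assume "?Ss = {}"
        then show ?thesis using val0[of \<sigma>, OF sig] Fi T01 xr[OF nn] by auto
      next
        fix j assume j: "?Ss = {j}"
        then have jr: "j \<in> {1..n}" by auto
        have "T (x 1) (y 1) \<le> T (x (\<sigma> j)) (y j)"
        proof -
          have r2: "\<sigma> j \<in> {1..n}" using sig[OF jr] .
          have a1: "x 1 \<le> x (\<sigma> j)" using monx(1)[of 1 "\<sigma> j"] r2 by auto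
          have a2: "y 1 \<le> y j" using monx(2)[of 1 j] jr by auto
          show ?thesis using Tmono[OF xr(1)[OF nn] xr(2)[OF nn] xr(1)[OF r2] xr(2)[OF jr] a1 a2] .
        qed
        then show ?thesis using val1[of \<sigma> j, OF sig j] Fi by simp
      next
        assume "2 \<le> card ?Ss"
        then obtain i j where ij: "i \<in> ?Ss" "j \<in> ?Ss" "i \<noteq> j"
          using two_elems by blast
        have ir: "i \<in> {1..n}" "x (\<sigma> i) < 1" "y i < 1" and jr: "j \<in> {1..n}" "x (\<sigma> j) < 1" "y j < 1"
          using ij by auto
        have "\<sigma> i = \<sigma> j \<or> i = j"
        proof (rule disjE[OF XY])
          assume h: "\<forall>p\<in>{1..n}. x p < 1 \<longrightarrow> p = 1"
          have "\<sigma> i = 1" using h sig[OF ir(1)] ir(2) by blast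
          moreover have "\<sigma> j = 1" using h sig[OF jr(1)] jr(2) by blast
          ultimately show ?thesis by simp
        next
          assume h: "\<forall>q\<in>{1..n}. y q < 1 \<longrightarrow> q = 1"
          have "i = 1" using h ir by blast
          moreover have "j = 1" using h jr by blast
          ultimately show ?thesis by simp
        qed
        moreover have inj: "inj_on \<sigma> {1..n}" using bij by (simp add: bij_betw_def)
        ultimately have "i = j" using inj_onD[OF inj _ ir(1) jr(1)] by blast
        then show ?thesis using ij(3) by simp
      qed
    qed
  qed
  have cnt: "1 + j - i \<le> card ?Ss" if "1 \<le> i" "i \<le> j" "j \<le> n" "y j < 1" "x (n + 1 - i) < 1" for i j
  proof -
    have "{p\<in>{1..n}. p \<le> j \<and> \<sigma> p \<le> n + 1 - i} \<subseteq> ?Ss"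
    proof
      fix p assume p: "p \<in> {p\<in>{1..n}. p \<le> j \<and> \<sigma> p \<le> n + 1 - i}"
      then have "x (\<sigma> p) \<le> x (n + 1 - i)" "y p \<le> y j" using monx[of "\<sigma> p" "n+1-i"] monx[of p j] sig[of p] that by auto
      then show "p \<in> ?Ss" using p that by auto
    qed
    then have "card {p\<in>{1..n}. p \<le> j \<and> \<sigma> p \<le> n + 1 - i} \<le> card ?Ss" by (intro card_mono) auto
    then show ?thesis using count_down[OF bij that(1-3)] by linarith
  qed
  have lower: "?Fs \<le> ?Fr"
  proof -
    have "finite ?Sr" by auto
    from trich[OF this] show ?thesis
    proof (elim disjE exE)
      assume "?Sr = {}"
      then show ?thesis using val0[of "\<lambda>i. n + 1 - i", OF rvr] bnd[of \<sigma>, OF sig] by simp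
    next
      assume c2: "2 \<le> card ?Sr"
      then obtain i j where ij: "i \<in> ?Sr" "j \<in> ?Sr" "i < j"
        using two_elems by blast
      have "1 + j - i \<le> card ?Ss"
      proof -
        have "y i \<le> y j" using monx(2)[of i j] ij by auto
        then show ?thesis using cnt[of i j] ij by auto
      qed
      then have "2 \<le> card ?Ss" using ij by linarith
      then show ?thesis using val2[of \<sigma>, OF sig] bnd[of "\<lambda>i. n + 1 - i", OF rvr] by simp
    next
      fix k assume k: "?Sr = {k}"
      have kr: "k \<in> {1..n}" "x (n + 1 - k) < 1" "y k < 1" using k by auto
      have Fr: "?Fr = T (x (n + 1 - k)) (y k)" using val1[of "\<lambda>i. n + 1 - i" k, OF rvr k] by simp
      have "1 \<le> card ?Ss" using cnt[of k k] kr by auto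
      then have ne: "?Ss \<noteq> {}" by (metis card.empty not_one_le_zero)
      from trich[OF finS] show ?thesis
      proof (elim disjE exE)
        assume "?Ss = {}" then show ?thesis using ne by simp
      next
        assume "2 \<le> card ?Ss"
        then show ?thesis using val2[of \<sigma>, OF sig] bnd[of "\<lambda>i. n + 1 - i", OF rvr] by simp
      next
        fix j assume j: "?Ss = {j}"
        then have jr: "j \<in> {1..n}" "x (\<sigma> j) < 1" "y j < 1" by auto
        have jk: "j \<le> k"
        proof (rule ccontr)
          assume "\<not> j \<le> k"
          then have "n + 1 - j \<le> n + 1 - k" "1 \<le> n + 1 - j" "n + 1 - k \<le> n" using jr kr by auto
          then have "x (n + 1 - j) \<le> x (n + 1 - k)" using monx(1)[of "n+1-j" "n+1-k"] by blast
          then have "j \<in> ?Sr" using jr kr by auto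
          then have "j = k" using k by blast
          then show False using \<open>\<not> j \<le> k\<close> by simp
        qed
        have sk: "\<sigma> j \<le> n + 1 - k"
        proof (rule ccontr)
          assume a: "\<not> \<sigma> j \<le> n + 1 - k"
          define p where "p = n + 1 - \<sigma> j"
          have sj: "\<sigma> j \<in> {1..n}" using sig[OF jr(1)] .
          have pr: "p \<in> {1..n}" "p < k" using sj a kr by (auto simp: p_def)
          have "y p \<le> y k" using monx[of p k] pr kr by auto
          moreover have "n + 1 - p = \<sigma> j" using sj by (auto simp: p_def)
          ultimately have "p \<in> ?Sr" using pr jr kr by auto
          then have "p = k" using k by blast
          then show False using pr by simp
        qed
        have "T (x (\<sigma> j)) (y j) \<le> T (x (n + 1 - k)) (y k)"
        proof -
          have r1: "n + 1 - k \<in> {1..n}" using kr by auto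
          have r2: "\<sigma> j \<in> {1..n}" using sig[OF jr(1)] .
          have a1: "x (\<sigma> j) \<le> x (n + 1 - k)" using monx(1)[of "\<sigma> j" "n+1-k"] r1 r2 sk by auto
          have a2: "y j \<le> y k" using monx(2)[of j k] kr(1) jr(1) jk by auto
          show ?thesis using Tmono[OF xr(1)[OF r2] xr(2)[OF jr(1)] xr(1)[OF r1] xr(2)[OF kr(1)] a1 a2] .
        qed
        then show ?thesis using val1[of \<sigma> j, OF sig j] Fr by simp
      qed
    qed
  qed
  show "?Fs \<le> ?Fr \<and> ?Fi \<le> ?Fs" using upper lower by simp
qed


theorem theorem12:
  fixes otimes oplus :: "real \<Rightarrow> real \<Rightarrow> real"
  shows "(tnorm otimes \<and> no_zero_divisors otimes \<longrightarrow>
            rearrangement_ineq otimes drastic_max)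
       \<and> (tconorm oplus \<and> no_zero_divisors (dual_op oplus) \<longrightarrow>
            dual_rearrangement_ineq drastic_min oplus)"
  using part1 part2 by blast

end
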